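(* Let $n\ge 2$. In the $(n,2,2)$ scenario with detection post-selection, the set $\tilde{\mathcal{L}}$ of post-selected correlators achievable by LHV models is strictly larger than the convex hull of the deterministic correlators $\tilde p(1|\mathbf{s})=\delta^1_{g(\mathbf{s})}$, $g$ ranging over linear Boolean functions on $\mathbf{s}$; that is, some LHV model with detection yields a post-selected correlator outside this convex hull.
   Context: $(n,2,2)$ scenario with imperfect detection: party $j$ receives input $s_j\in\{0,1\}$ and outputs two bits, a detection bit $t_j\in\{0,1\}$ ($1$ = detected) and an outcome $m_j\in\{0,1\}$. An LHV model is $p(\mathbf{t},\mathbf{m}|\mathbf{s})=\int p(\lambda)d\lambda\prod_{j}p(t_j,m_j|s_j,\lambda)$. Detection post-selection keeps only runs with $\mathbf{t}=(1,\dots,1)$; the post-selected correlator is $\tilde p(1|\mathbf{s})=p(\bigoplus_j m_j=1\mid\mathbf{s},\mathbf{t}=(1,\dots,1))$ (defined when the conditioning event has positive probability). A linear Boolean function on $\mathbf{s}$ is $g(\mathbf{s})=\big(\bigoplus_j a_j s_j\big)\oplus b$ with $a_j,b\in\{0,1\}$; $\oplus$ is addition mod 2. *)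

theory Defs
  imports "HOL-Probability.Probability"
begin

text \<open>Parties are indexed by j < n.
  Outputs of party j: a pair (t_j, m_j) :: bool \<times> bool, t_j = True meaning "detected".\<close>

definition inputs :: "nat \<Rightarrow> (nat \<Rightarrow> bool) set" where
  "inputs n = {s. \<forall>j. n \<le> j \<longrightarrow> s j = False}"

text \<open>An LHV model: hidden variable distribution P over lambda (taken to be nat-valued),
  and local response distributions r j lambda s_j = p(t_j, m_j | s_j, lambda).\<close>

definition lhv_joint ::
  "nat \<Rightarrow> nat pmf \<Rightarrow> (nat \<Rightarrow> nat \<Rightarrow> bool \<Rightarrow> (bool \<times> bool) pmf) \<Rightarrow> (nat \<Rightarrow> bool)
     \<Rightarrow> (nat \<Rightarrow> bool \<times> bool) pmf" where
  "lhv_joint n P r s = bind_pmf P (\<lambda>l. Pi_pmf {..<n} (False, False) (\<lambda>j. r j l (s j)))"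

definition all_detected :: "nat \<Rightarrow> (nat \<Rightarrow> bool \<times> bool) set" where
  "all_detected n = {x. \<forall>j<n. fst (x j)}"

definition parity_one :: "nat \<Rightarrow> (nat \<Rightarrow> bool \<times> bool) set" where
  "parity_one n = {x. x \<in> all_detected n \<and> odd (card {j\<in>{..<n}. snd (x j)})}"

definition postsel_corr ::
  "nat \<Rightarrow> nat pmf \<Rightarrow> (nat \<Rightarrow> nat \<Rightarrow> bool \<Rightarrow> (bool \<times> bool) pmf) \<Rightarrow> (nat \<Rightarrow> bool) \<Rightarrow> real" where
  "postsel_corr n P r s =
     measure_pmf.prob (lhv_joint n P r s) (parity_one n) /
     measure_pmf.prob (lhv_joint n P r s) (all_detected n)"

definition lin_bool :: "nat \<Rightarrow> (nat \<Rightarrow> bool) \<Rightarrow> bool \<Rightarrow> (nat \<Rightarrow> bool) \<Rightarrow> bool" where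
  "lin_bool n a b s = (odd (card {j\<in>{..<n}. a j \<and> s j}) \<noteq> b)"

definition det_corr :: "nat \<Rightarrow> (nat \<Rightarrow> bool) \<Rightarrow> bool \<Rightarrow> (nat \<Rightarrow> bool) \<Rightarrow> real" where
  "det_corr n a b s = (if lin_bool n a b s then 1 else 0)"

definition in_linear_hull :: "nat \<Rightarrow> ((nat \<Rightarrow> bool) \<Rightarrow> real) \<Rightarrow> bool" where
  "in_linear_hull n q \<longleftrightarrow>
     (\<exists>w :: (nat \<Rightarrow> bool) \<times> bool \<Rightarrow> real.
        (\<forall>ab \<in> inputs n \<times> UNIV. 0 \<le> w ab) \<and>
        (\<Sum>ab \<in> inputs n \<times> UNIV. w ab) = 1 \<and>
        (\<forall>s \<in> inputs n. q s = (\<Sum>(a,b) \<in> inputs n \<times> UNIV. w (a,b) * det_corr n a b s)))"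

end

theory Submission
  imports Defs
begin

definition F :: "nat \<Rightarrow> nat \<Rightarrow> bool \<Rightarrow> bool \<times> bool" where
  "F j l b = (if j = 0 \<and> l < 2 then (\<not> b, True)
              else if j = 1 \<and> 2 \<le> l \<and> l < 4 then (\<not> b, True) else (True, False))"

definition RR :: "nat \<Rightarrow> nat \<Rightarrow> bool \<Rightarrow> (bool \<times> bool) pmf" where
  "RR j l b = return_pmf (F j l b)"

definition PP :: "nat pmf" where "PP = pmf_of_set {0..<5}"

definition G :: "nat \<Rightarrow> (nat \<Rightarrow> bool) \<Rightarrow> nat \<Rightarrow> nat \<Rightarrow> bool \<times> bool" where
  "G n s l = (\<lambda>j. if j \<in> {..<n} then F j l (s j) else (False, False))"

lemma joint_eq: "lhv_joint n PP RR s = map_pmf (G n s) PP"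
  unfolding lhv_joint_def RR_def map_pmf_def G_def
  by (simp add: Pi_pmf_return_pmf)

lemma prob_gen: "measure_pmf.prob (lhv_joint n PP RR s) X = card ({0..<5::nat} \<inter> G n s -` X) / 5"
proof -
  have "measure_pmf.prob (lhv_joint n PP RR s) X = measure_pmf.prob (map_pmf (G n s) PP) X"
    by (simp only: joint_eq)
  also have "\<dots> = measure_pmf.prob PP (G n s -` X)" by simp
  also have "\<dots> = card ({0..<5::nat} \<inter> G n s -` X) / card {0..<5::nat}"
    unfolding PP_def by (rule measure_pmf_of_set) auto
  finally show ?thesis by simp
qed

lemma det_iff:
  assumes "n \<ge> 2"
  shows "G n s l \<in> all_detected n \<longleftrightarrow> (l < 2 \<longrightarrow> \<not> s 0) \<and> (2 \<le> l \<and> l < 4 \<longrightarrow> \<not> s 1)"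
proof -
  have "G n s l \<in> all_detected n \<longleftrightarrow> (\<forall>j<n. fst (F j l (s j)))"
    by (simp add: all_detected_def G_def)
  also have "\<dots> \<longleftrightarrow> (l < 2 \<longrightarrow> \<not> s 0) \<and> (2 \<le> l \<and> l < 4 \<longrightarrow> \<not> s 1)"
  proof
    assume h: "\<forall>j<n. fst (F j l (s j))"
    have "fst (F 0 l (s 0))" "fst (F 1 l (s 1))" using h assms by auto
    then show "(l < 2 \<longrightarrow> \<not> s 0) \<and> (2 \<le> l \<and> l < 4 \<longrightarrow> \<not> s 1)"
      unfolding F_def by (auto split: if_splits)
  next
    assume h: "(l < 2 \<longrightarrow> \<not> s 0) \<and> (2 \<le> l \<and> l < 4 \<longrightarrow> \<not> s 1)"
    show "\<forall>j<n. fst (F j l (s j))"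
    proof (intro allI impI)
      fix j assume "j < n"
      show "fst (F j l (s j))"
        using h unfolding F_def by (cases "j = 0"; cases "j = 1") auto
    qed
  qed
  finally show ?thesis .
qed

lemma par_set:
  assumes "n \<ge> 2"
  shows "{j\<in>{..<n}. snd (G n s l j)} = (if l < 2 then {0} else if l < 4 then {1} else {})"
proof -
  have "j \<in> {j\<in>{..<n}. snd (G n s l j)} \<longleftrightarrow> j \<in> (if l < 2 then {0} else if l < 4 then {1} else {})" for j
    using assms unfolding G_def F_def by (cases "j = 0"; cases "j = 1") auto
  then show ?thesis by blast
qed

lemma par_iff:
  assumes "n \<ge> 2"
  shows "G n s l \<in> parity_one n \<longleftrightarrow> G n s l \<in> all_detected n \<and> l < 4"
  unfolding parity_one_def using par_set[OF assms, of s l] by auto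

lemma prob_det:
  assumes "n \<ge> 2"
  shows "measure_pmf.prob (lhv_joint n PP RR s) (all_detected n) =
     card {l::nat\<in>{0..<5}. (l < 2 \<longrightarrow> \<not> s 0) \<and> (2 \<le> l \<and> l < 4 \<longrightarrow> \<not> s 1)} / 5"
proof -
  have "{0..<5::nat} \<inter> G n s -` all_detected n = {l\<in>{0..<5}. (l < 2 \<longrightarrow> \<not> s 0) \<and> (2 \<le> l \<and> l < 4 \<longrightarrow> \<not> s 1)}"
    using det_iff[OF assms] by auto
  then show ?thesis using prob_gen by simp
qed

lemma prob_par:
  assumes "n \<ge> 2"
  shows "measure_pmf.prob (lhv_joint n PP RR s) (parity_one n) =
     card {l::nat\<in>{0..<4}. (l < 2 \<longrightarrow> \<not> s 0) \<and> (2 \<le> l \<and> l < 4 \<longrightarrow> \<not> s 1)} / 5"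
proof -
  have "{0..<5::nat} \<inter> G n s -` parity_one n = {l\<in>{0..<4}. (l < 2 \<longrightarrow> \<not> s 0) \<and> (2 \<le> l \<and> l < 4 \<longrightarrow> \<not> s 1)}"
    using det_iff[OF assms] par_iff[OF assms] by auto
  then show ?thesis using prob_gen by simp
qed

lemma card_help:
  "{l\<in>{0..<5::nat}. (l < 2 \<longrightarrow> \<not> x) \<and> (2 \<le> l \<and> l < 4 \<longrightarrow> \<not> y)} =
     (if x then {} else {0,1}) \<union> (if y then {} else {2,3}) \<union> {4}"
  "{l\<in>{0..<4::nat}. (l < 2 \<longrightarrow> \<not> x) \<and> (2 \<le> l \<and> l < 4 \<longrightarrow> \<not> y)} =
     (if x then {} else {0,1}) \<union> (if y then {} else {2,3})"
  by auto

definition sv :: "bool \<Rightarrow> bool \<Rightarrow> nat \<Rightarrow> bool" where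
  "sv x y = (\<lambda>j. (j = 0 \<and> x) \<or> (j = Suc 0 \<and> y))"

lemma sv_in: "sv x y \<in> inputs n" if "n \<ge> 2"
  using that by (auto simp: sv_def inputs_def)

lemma corr_vals:
  assumes "n \<ge> 2"
  shows "postsel_corr n PP RR (sv False False) = 4/5"
    "postsel_corr n PP RR (sv True False) = 2/3"
    "postsel_corr n PP RR (sv False True) = 2/3"
    "postsel_corr n PP RR (sv True True) = 0"
  unfolding postsel_corr_def prob_det[OF assms] prob_par[OF assms] card_help
  by (simp_all add: sv_def)

lemma det_pos:
  assumes "n \<ge> 2"
  shows "measure_pmf.prob (lhv_joint n PP RR s) (all_detected n) > 0"
  unfolding prob_det[OF assms] card_help by simp

lemma card_lin:
  assumes "n \<ge> 2"
  shows "card {j\<in>{..<n}. a j \<and> sv x y j} = (if a 0 \<and> x then 1 else 0) + (if a 1 \<and> y then 1 else 0)"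
proof -
  have "{j\<in>{..<n}. a j \<and> sv x y j} = (if a 0 \<and> x then {0} else {}) \<union> (if a 1 \<and> y then {1} else {})"
    using assms by (auto simp: sv_def)
  then show ?thesis by auto
qed

lemma det_ineq:
  assumes "n \<ge> 2"
  shows "det_corr n a b (sv False False) + det_corr n a b (sv True False)
     + det_corr n a b (sv False True) - det_corr n a b (sv True True) \<le> 2"
  unfolding det_corr_def lin_bool_def card_lin[OF assms]
  by (cases "a 0"; cases "a 1"; cases b) auto

theorem proposition4p1p1:
  fixes n :: nat
  assumes "n \<ge> 2"
  shows "\<exists>(P :: nat pmf) (r :: nat \<Rightarrow> nat \<Rightarrow> bool \<Rightarrow> (bool \<times> bool) pmf).
           (\<forall>s \<in> inputs n. measure_pmf.prob (lhv_joint n P r s) (all_detected n) > 0) \<and>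
           \<not> in_linear_hull n (postsel_corr n P r)"
proof (intro exI conjI ballI)
  show "measure_pmf.prob (lhv_joint n PP RR s) (all_detected n) > 0" for s
    using det_pos[OF assms] .
  show "\<not> in_linear_hull n (postsel_corr n PP RR)"
  proof
    assume "in_linear_hull n (postsel_corr n PP RR)"
    then obtain w where w0: "\<forall>ab \<in> inputs n \<times> UNIV. 0 \<le> w ab"
      and w1: "(\<Sum>ab \<in> inputs n \<times> UNIV. w ab) = 1"
      and wq: "\<forall>s \<in> inputs n. postsel_corr n PP RR s = (\<Sum>(a,b) \<in> inputs n \<times> UNIV. w (a,b) * det_corr n a b s)"
      unfolding in_linear_hull_def by blast
    let ?I = "inputs n \<times> (UNIV :: bool set)"
    let ?D = "\<lambda>a b. det_corr n a b (sv False False) + det_corr n a b (sv True False)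
     + det_corr n a b (sv False True) - det_corr n a b (sv True True)"
    have "postsel_corr n PP RR (sv False False) + postsel_corr n PP RR (sv True False)
       + postsel_corr n PP RR (sv False True) - postsel_corr n PP RR (sv True True)
       = (\<Sum>(a,b) \<in> ?I. w (a,b) * ?D a b)"
      using wq sv_in[OF assms]
      by (simp add: case_prod_beta sum.distrib sum_subtractf algebra_simps)
    also have "\<dots> \<le> (\<Sum>(a,b) \<in> ?I. w (a,b) * 2)"
      using w0 det_ineq[OF assms]
      by (intro sum_mono) (auto intro: mult_left_mono)
    also have "\<dots> = 2" using w1 by (simp add: case_prod_beta sum_distrib_right[symmetric])
    finally show False using corr_vals[OF assms] by simp
  qed
qed

end
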